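(* Let $G$ be a chordal graph with clique number $3$, let $v_1,\dots,v_n$ be a perfect elimination ordering of $G$, and let $\mathcal S$ be a best choice recoloring for this ordering between two proper $5$-colorings of $G$. Let $x,u,v,w$ be vertices of $G$ with $N^+(x)=\{u,v\}$ and $N^+(u)=\{v,w\}$. Let $i$ be the index with $x=v_i$ and let $c=\max_{i'>i}|\mathcal S_{|v_{i'}}|$. If $x$ is recolored at least $c-1$ times in $\mathcal S$, then: (1) the pattern $u\,w\,v\,u$ occurs at least $c-34$ times in $\mathcal S_{|N^+[u]}$; (2) in the sequence of colors taken by $x$, there are at most $74$ indices at which three consecutive colors are not pairwise distinct.
   Context: Recoloring sequence $\mathcal S=s_1\dots s_t$: sequence of pairs $(v,c)$ (recolor $v$ with $c$) with all intermediate colorings proper $5$-colorings. $\mathcal S_{|X}$ is the subsequence of steps recoloring vertices of $X$; $\mathcal S_{|v}$ is the sequence of colors taken by $v$ and $|\mathcal S_{|v}|$ the number of times $v$ is recolored. A sequence contains the pattern $u\,w\,v\,u$ at an index if the consecutive steps starting there recolor $u$, $w$, $v$, $u$ in this order; occurrences are counted by their starting indices. Orientation: edge $v_iv_j$ with $i<j$ is oriented towards $v_j$; $N^+(y)$ is the set of out-neighbors of $y$ (at most $2$, mutually adjacent), $N^+[y]=N^+(y)\cup\{y\}$; $V_i=\{v_i,\dots,v_n\}$. Best choice recoloring (recursive): for $G[V_n]$, recolor $v_n$ to $\beta(v_n)$ if needed. Given a best choice recoloring $\mathcal S'$ of $G[V_{i+1}]$, extend to $y=v_i$ (starting at $\alpha(y)$):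 let $t_1<\dots<t_\ell$ be the steps of $\mathcal S'$ recoloring an out-neighbor of $y$, with new colors $c_{t_j}$. A color is valid for $y$ at step $t$ if it differs from the colors of the out-neighbors of $y$ just before and just after step $t$. A best choice at step $t$ is: $\beta(y)$ if distinct from $c_t,\dots,c_{t_\ell}$; otherwise any valid color not in $\{c_{t_j}:t_j\ge t\}$; otherwise the valid color appearing latest in $(c_{t_j})_{t_j\ge t}$. Whenever a step of $\mathcal S'$ recolors an out-neighbor of $y$ with the current color of $y$, insert just before it a recoloring of $y$ with a best choice; no other recolorings of $y$ except possibly a final one to $\beta(y)$. A best choice recoloring of $G$ is any sequence obtained by applying this successively to $v_n,\dots,v_1$. *)

theory Defs
  imports Main
begin

definition simple_graph :: "'a set \<Rightarrow> ('a \<Rightarrow> 'a \<Rightarrow> bool) \<Rightarrow> bool" where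
  "simple_graph V E \<longleftrightarrow> finite V \<and> (\<forall>a b. E a b \<longrightarrow> a \<in> V \<and> b \<in> V)
     \<and> (\<forall>a b. E a b \<longrightarrow> E b a) \<and> (\<forall>a. \<not> E a a)"

definition is_cycle :: "'a set \<Rightarrow> ('a \<Rightarrow> 'a \<Rightarrow> bool) \<Rightarrow> 'a list \<Rightarrow> bool" where
  "is_cycle V E cs \<longleftrightarrow> length cs \<ge> 3 \<and> distinct cs \<and> set cs \<subseteq> V
     \<and> (\<forall>k < length cs. E (cs ! k) (cs ! ((k + 1) mod length cs)))"

definition has_chord :: "('a \<Rightarrow> 'a \<Rightarrow> bool) \<Rightarrow> 'a list \<Rightarrow> bool" where
  "has_chord E cs \<longleftrightarrow> (\<exists>j < length cs. \<exists>k < length cs. E (cs ! j) (cs ! k)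
     \<and> k \<noteq> (j + 1) mod length cs \<and> j \<noteq> (k + 1) mod length cs)"

definition chordal :: "'a set \<Rightarrow> ('a \<Rightarrow> 'a \<Rightarrow> bool) \<Rightarrow> bool" where
  "chordal V E \<longleftrightarrow> (\<forall>cs. is_cycle V E cs \<and> length cs \<ge> 4 \<longrightarrow> has_chord E cs)"

definition is_clique :: "'a set \<Rightarrow> ('a \<Rightarrow> 'a \<Rightarrow> bool) \<Rightarrow> 'a set \<Rightarrow> bool" where
  "is_clique V E K \<longleftrightarrow> K \<subseteq> V \<and> (\<forall>a\<in>K. \<forall>b\<in>K. a \<noteq> b \<longrightarrow> E a b)"

definition clique_number :: "'a set \<Rightarrow> ('a \<Rightarrow> 'a \<Rightarrow> bool) \<Rightarrow> nat" where
  "clique_number V E = Max {card K | K. is_clique V E K}"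

text \<open>The ordering v_1,...,v_n is the list ord (0-indexed: v_(i+1) = ord ! i).
  Out-neighbours: later neighbours in the ordering.\<close>
definition out_nbrs :: "('a \<Rightarrow> 'a \<Rightarrow> bool) \<Rightarrow> 'a list \<Rightarrow> 'a \<Rightarrow> 'a set" where
  "out_nbrs E ord y = {z. \<exists>i j. i < j \<and> j < length ord \<and> ord ! i = y \<and> ord ! j = z \<and> E y z}"

definition perfect_elim_ordering :: "'a set \<Rightarrow> ('a \<Rightarrow> 'a \<Rightarrow> bool) \<Rightarrow> 'a list \<Rightarrow> bool" where
  "perfect_elim_ordering V E ord \<longleftrightarrow> distinct ord \<and> set ord = V
     \<and> (\<forall>y \<in> V. is_clique V E (out_nbrs E ord y))"

definition proper_5col :: "'a set \<Rightarrow> ('a \<Rightarrow> 'a \<Rightarrow> bool) \<Rightarrow> ('a \<Rightarrow> nat) \<Rightarrow> bool" where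
  "proper_5col V E f \<longleftrightarrow> (\<forall>v\<in>V. f v < 5) \<and> (\<forall>a b. E a b \<longrightarrow> f a \<noteq> f b)"

definition apply_steps :: "('a \<Rightarrow> nat) \<Rightarrow> ('a \<times> nat) list \<Rightarrow> ('a \<Rightarrow> nat)" where
  "apply_steps f S = foldl (\<lambda>g (v, c). g(v := c)) f S"

definition recoloring_seq :: "'a set \<Rightarrow> ('a \<Rightarrow> 'a \<Rightarrow> bool) \<Rightarrow> ('a \<Rightarrow> nat) \<Rightarrow> ('a \<Rightarrow> nat)
    \<Rightarrow> ('a \<times> nat) list \<Rightarrow> bool" where
  "recoloring_seq V E \<alpha> \<beta> S \<longleftrightarrow> (\<forall>s \<in> set S. fst s \<in> V)
     \<and> (\<forall>k \<le> length S. proper_5col V E (apply_steps \<alpha> (take k S)))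
     \<and> (\<forall>v \<in> V. apply_steps \<alpha> S v = \<beta> v)"

text \<open>A colour b is valid for y at a step which changes the colouring g (of the
  already recoloured subgraph) into g': it is a colour and differs from the colours
  of the out-neighbours N of y just before and just after the step.\<close>
definition valid_col :: "'a set \<Rightarrow> ('a \<Rightarrow> nat) \<Rightarrow> ('a \<Rightarrow> nat) \<Rightarrow> nat \<Rightarrow> bool" where
  "valid_col N g g' b \<longleftrightarrow> b < 5 \<and> (\<forall>u\<in>N. b \<noteq> g u \<and> b \<noteq> g' u)"

text \<open>Best choice at a step: fc is the list of colours c_(t_j), t_j \<ge> t (future colours
  given to out-neighbours, starting with the current step); by0 is beta(y).
  The "latest appearing" colour is the one whose first occurrence in fc is latest.\<close>
definition best_choice :: "'a set \<Rightarrow> nat \<Rightarrow> ('a \<Rightarrow> nat) \<Rightarrow> ('a \<Rightarrow> nat) \<Rightarrow> nat list \<Rightarrow> nat \<Rightarrow> bool" where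
  "best_choice N by0 g g' fc b \<longleftrightarrow> valid_col N g g' b \<and>
     (if valid_col N g g' by0 \<and> by0 \<notin> set fc then b = by0
      else if (\<exists>b'. valid_col N g g' b' \<and> b' \<notin> set fc) then b \<notin> set fc
      else (\<forall>b'. valid_col N g g' b' \<longrightarrow>
               (LEAST k. k < length fc \<and> fc ! k = b') \<le> (LEAST k. k < length fc \<and> fc ! k = b)))"

text \<open>bc_ext N y by0 g a S' S: S is obtained by0 extending (the remaining part S' of) the
  best choice recolouring of G[V_(i+1)] to y, where g is the current colouring reached
  along S', a is the current colour of y, N = N^+(y), by0 = beta(y).\<close>
inductive bc_ext :: "'a set \<Rightarrow> 'a \<Rightarrow> nat \<Rightarrow> ('a \<Rightarrow> nat) \<Rightarrow> nat \<Rightarrow> ('a \<times> nat) list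
    \<Rightarrow> ('a \<times> nat) list \<Rightarrow> bool" where
  ext_end_same: "a = by0 \<Longrightarrow> bc_ext N y by0 g a [] []"
| ext_end_final: "a \<noteq> by0 \<Longrightarrow> bc_ext N y by0 g a [] [(y, by0)]"
| ext_conflict: "v \<in> N \<Longrightarrow> c = a \<Longrightarrow>
     best_choice N by0 g (g(v := c)) (map snd (filter (\<lambda>s. fst s \<in> N) ((v, c) # rest))) b \<Longrightarrow>
     bc_ext N y by0 (g(v := c)) b rest out \<Longrightarrow>
     bc_ext N y by0 g a ((v, c) # rest) ((y, b) # (v, c) # out)"
| ext_pass: "\<not> (v \<in> N \<and> c = a) \<Longrightarrow>
     bc_ext N y by0 (g(v := c)) a rest out \<Longrightarrow>
     bc_ext N y by0 g a ((v, c) # rest) ((v, c) # out)"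

text \<open>bcr V E ord alpha beta i S: S is a best choice recolouring of G[V_i] where
  V_i = set (drop i ord) (0-indexed). For i = length ord the graph is empty and S = [];
  the step from i+1 to i extends with y = ord ! i. (Extending the empty sequence
  to the last vertex is exactly "recolour v_n to beta(v_n) if needed".)\<close>
inductive bcr :: "'a set \<Rightarrow> ('a \<Rightarrow> 'a \<Rightarrow> bool) \<Rightarrow> 'a list \<Rightarrow> ('a \<Rightarrow> nat) \<Rightarrow> ('a \<Rightarrow> nat)
    \<Rightarrow> nat \<Rightarrow> ('a \<times> nat) list \<Rightarrow> bool" where
  bcr_empty: "bcr V E ord \<alpha> \<beta> (length ord) []"
| bcr_step: "bcr V E ord \<alpha> \<beta> (Suc i) S' \<Longrightarrow> i < length ord \<Longrightarrow>
     bc_ext (out_nbrs E ord (ord ! i)) (ord ! i) (\<beta> (ord ! i)) \<alpha> (\<alpha> (ord ! i)) S' S \<Longrightarrow>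
     bcr V E ord \<alpha> \<beta> i S"

definition best_choice_recoloring :: "'a set \<Rightarrow> ('a \<Rightarrow> 'a \<Rightarrow> bool) \<Rightarrow> 'a list \<Rightarrow> ('a \<Rightarrow> nat)
    \<Rightarrow> ('a \<Rightarrow> nat) \<Rightarrow> ('a \<times> nat) list \<Rightarrow> bool" where
  "best_choice_recoloring V E ord \<alpha> \<beta> S \<longleftrightarrow>
     recoloring_seq V E \<alpha> \<beta> S \<and> bcr V E ord \<alpha> \<beta> 0 S"

definition restrict_seq :: "('a \<times> nat) list \<Rightarrow> 'a set \<Rightarrow> ('a \<times> nat) list" where
  "restrict_seq S X = filter (\<lambda>s. fst s \<in> X) S"

definition colors_of :: "('a \<times> nat) list \<Rightarrow> 'a \<Rightarrow> nat list" where
  "colors_of S v = map snd (restrict_seq S {v})"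

definition num_recol :: "('a \<times> nat) list \<Rightarrow> 'a \<Rightarrow> nat" where
  "num_recol S v = length (colors_of S v)"

definition pattern_count :: "('a \<times> nat) list \<Rightarrow> 'a \<Rightarrow> 'a \<Rightarrow> 'a \<Rightarrow> nat" where
  "pattern_count T u w v = card {j. j + 3 < length T \<and> fst (T ! j) = u \<and>
     fst (T ! (j + 1)) = w \<and> fst (T ! (j + 2)) = v \<and> fst (T ! (j + 3)) = u}"

definition bad_triples :: "nat list \<Rightarrow> nat" where
  "bad_triples L = card {j. j + 2 < length L \<and>
     \<not> (L ! j \<noteq> L ! (j + 1) \<and> L ! j \<noteq> L ! (j + 2) \<and> L ! (j + 1) \<noteq> L ! (j + 2))}"

end

theory Submission
  imports Defs
begin


fun tvl :: "'a \<Rightarrow> 'a \<Rightarrow> nat \<Rightarrow> ('a \<times> nat) list \<Rightarrow> nat" where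
  "tvl u v cu [] = 0"
| "tvl u v cu (s # L) = (case L of [] \<Rightarrow> 0 | s2 # _ \<Rightarrow>
      (if fst s = u \<and> fst s2 = v \<and> snd s2 = cu then 1 else 0))
    + tvl u v (if fst s = u then snd s else cu) L"

lemma tvl_cons: "tvl u v cu (s # L) = (if L \<noteq> [] \<and> fst s = u \<and> fst (hd L) = v \<and> snd (hd L) = cu then 1 else 0)
  + tvl u v (if fst s = u then snd s else cu) L"
  by (cases L) auto

fun pcl :: "'a \<Rightarrow> 'a \<Rightarrow> 'a \<Rightarrow> ('a \<times> nat) list \<Rightarrow> nat" where
  "pcl u w v [] = 0"
| "pcl u w v (s # L) = (if 3 \<le> length L \<and> fst s = u \<and> fst (L!0) = w \<and> fst (L!1) = v \<and> fst (L!2) = u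
     then 1 else 0) + pcl u w v L"

fun uvu :: "'a \<Rightarrow> 'a \<Rightarrow> ('a \<times> nat) list \<Rightarrow> nat" where
  "uvu u v [] = 0"
| "uvu u v (s # L) = (if 2 \<le> length L \<and> fst s = u \<and> fst (L!0) = v \<and> fst (L!1) = u
     then 1 else 0) + uvu u v L"

fun spl :: "'a option \<Rightarrow> ('a \<times> nat) list \<Rightarrow> nat" where
  "spl l [] = 0"
| "spl l (s # L) = (if l = Some (fst s) then 1 else 0) + spl (Some (fst s)) L"

fun bt :: "nat list \<Rightarrow> nat" where
  "bt [] = 0"
| "bt (x # L) = (if 2 \<le> length L \<and> \<not> (x \<noteq> L!0 \<and> x \<noteq> L!1 \<and> L!0 \<noteq> L!1) then 1 else 0) + bt L"

fun bw :: "nat option \<Rightarrow> nat option \<Rightarrow> nat list \<Rightarrow> nat" where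
  "bw p q [] = 0"
| "bw p q (x # L) = (case p of None \<Rightarrow> 0 | Some p' \<Rightarrow> (case q of None \<Rightarrow> 0 | Some q' \<Rightarrow>
     (if \<not> (p' \<noteq> q' \<and> p' \<noteq> x \<and> q' \<noteq> x) then 1 else 0))) + bw q (Some x) L"

lemma pattern_count_pcl: "pattern_count T u w v = pcl u w v T"
proof (induction T)
  case Nil
  then show ?case by (simp add: pattern_count_def)
next
  case (Cons s T)
  let ?P = "\<lambda>L j. j + 3 < length L \<and> fst (L ! j) = u \<and> fst (L ! (j + 1)) = w \<and>
     fst (L ! (j + 2)) = v \<and> fst (L ! (j + 3)) = u"
  have eq: "{j. ?P (s#T) j} = (if ?P (s#T) 0 then {0} else {}) \<union> Suc ` {j. ?P T j}"
    apply (rule set_eqI)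
    subgoal for j by (cases j) (auto simp: eval_nat_numeral)
    done
  have fin: "finite {j. ?P T j}" by (rule finite_subset[of _ "{..<length T}"]) auto
  have "card {j. ?P (s#T) j} = (if ?P (s#T) 0 then 1 else 0) + card {j. ?P T j}"
    unfolding eq using fin
    by (subst card_Un_disjoint) (auto simp: card_image)
  moreover have "?P (s#T) 0 = (3 \<le> length T \<and> fst s = u \<and> fst (T!0) = w \<and> fst (T!1) = v \<and> fst (T!2) = u)"
    by (auto simp: numeral_eq_Suc)
  ultimately show ?case using Cons by (simp add: pattern_count_def)
qed

lemma bad_triples_bt: "bad_triples L = bt L"
proof (induction L)
  case Nil
  then show ?case by (simp add: bad_triples_def)
next
  case (Cons x L)
  let ?P = "\<lambda>L j. j + 2 < length L \<and>
     \<not> (L ! j \<noteq> L ! (j + 1) \<and> L ! j \<noteq> L ! (j + 2) \<and> L ! (j + 1) \<noteq> L ! (j + 2))"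
  have eq: "{j. ?P (x#L) j} = (if ?P (x#L) 0 then {0} else {}) \<union> Suc ` {j. ?P L j}"
    apply (rule set_eqI)
    subgoal for j by (cases j) (auto simp: eval_nat_numeral)
    done
  have fin: "finite {j. ?P L j}" by (rule finite_subset[of _ "{..<length L}"]) auto
  have "card {j. ?P (x#L) j} = (if ?P (x#L) 0 then 1 else 0) + card {j. ?P L j}"
    unfolding eq using fin
    by (subst card_Un_disjoint) (auto simp: card_image)
  moreover have "?P (x#L) 0 = (2 \<le> length L \<and> \<not> (x \<noteq> L!0 \<and> x \<noteq> L!1 \<and> L!0 \<noteq> L!1))"
    by (auto simp: numeral_eq_Suc)
  ultimately show ?case using Cons by (simp add: bad_triples_def)
qed

lemma bw_SS: "bw (Some a) (Some b) L = bt (a # b # L)"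
  by (induction L arbitrary: a b) auto

lemma bw_NN: "bw None None L = bt L"
proof (cases L)
  case (Cons x L')
  then show ?thesis
  proof (cases L')
    case (Cons y L'')
    then show ?thesis using \<open>L = x # L'\<close> by (simp add: bw_SS)
  qed simp
qed simp

lemma bt_le: "bt L \<le> length L"
  by (induction L) auto

lemma bw_le: "bw p q L \<le> length L"
proof (induction L arbitrary: p q)
  case (Cons x L)
  have "(case p of None \<Rightarrow> 0 | Some p' \<Rightarrow> (case q of None \<Rightarrow> 0 | Some q' \<Rightarrow>
     (if \<not> (p' \<noteq> q' \<and> p' \<noteq> x \<and> q' \<noteq> x) then 1 else 0))) \<le> (1::nat)"
    by (auto split: option.splits)
  then show ?case using Cons.IH[of q "Some x"] by simp
qed simp

lemma tvl_filter: "tvl u v cu R \<le> tvl u v cu (filter (\<lambda>s. fst s \<in> {u,v}) R)"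
proof (induction R arbitrary: cu)
  case Nil then show ?case by simp
next
  case (Cons s R)
  show ?case
  proof (cases "fst s \<in> {u,v}")
    case True
    have h: "(case R of [] \<Rightarrow> 0 | s2 # _ \<Rightarrow> (if fst s = u \<and> fst s2 = v \<and> snd s2 = cu then 1 else 0))
      \<le> (case filter (\<lambda>s. fst s \<in> {u,v}) R of [] \<Rightarrow> 0 | s2 # _ \<Rightarrow> (if fst s = u \<and> fst s2 = v \<and> snd s2 = cu then 1 else (0::nat)))" (is "?a \<le> ?b")
      by (cases R) auto
    show ?thesis using True Cons.IH[of "if fst s = u then snd s else cu"] h by simp
  next
    case False
    then have "fst s \<noteq> u" by auto
    then have "tvl u v cu (s#R) = tvl u v cu R" by (cases R) auto
    then show ?thesis using False Cons.IH[of cu] by simp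
  qed
qed

declare tvl.simps(2)[simp del]

lemma uvu_filter: "u \<noteq> w \<Longrightarrow> v \<noteq> w \<Longrightarrow> pcl u w v R \<le> uvu u v (filter (\<lambda>s. fst s \<in> {u,v}) R)"
proof (induction R)
  case Nil then show ?case by simp
next
  case (Cons s R)
  show ?case
  proof (cases "fst s \<in> {u,v}")
    case True
    have imp: "3 \<le> length R \<and> fst s = u \<and> fst (R!0) = w \<and> fst (R!1) = v \<and> fst (R!2) = u
       \<Longrightarrow> 2 \<le> length (filter (\<lambda>s. fst s \<in> {u,v}) R) \<and> fst s = u \<and> fst ((filter (\<lambda>s. fst s \<in> {u,v}) R)!0) = v
           \<and> fst ((filter (\<lambda>s. fst s \<in> {u,v}) R)!1) = u"
    proof -
      assume True: "3 \<le> length R \<and> fst s = u \<and> fst (R!0) = w \<and> fst (R!1) = v \<and> fst (R!2) = u"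
      then obtain r0 r1 r2 R' where R: "R = r0 # r1 # r2 # R'"
        by (metis One_nat_def Suc_le_length_iff numeral_3_eq_3)
      have f: "filter (\<lambda>s. fst s \<in> {u,v}) R = r1 # r2 # filter (\<lambda>s. fst s \<in> {u,v}) R'"
        using R True Cons.prems by auto
      show ?thesis unfolding f using R True by auto
    qed
    have "(if 3 \<le> length R \<and> fst s = u \<and> fst (R!0) = w \<and> fst (R!1) = v \<and> fst (R!2) = u then 1 else 0)
       \<le> (if 2 \<le> length (filter (\<lambda>s. fst s \<in> {u,v}) R) \<and> fst s = u \<and> fst ((filter (\<lambda>s. fst s \<in> {u,v}) R)!0) = v
           \<and> fst ((filter (\<lambda>s. fst s \<in> {u,v}) R)!1) = u then 1 else (0::nat))"
      using imp by (simp only: split: if_splits) auto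
    then show ?thesis using True Cons by simp
  next
    case False
    then show ?thesis using Cons by auto
  qed
qed

lemma spl_uvu: "spl l T + 2 * uvu u v T + (if T \<noteq> [] \<and> l \<noteq> Some (fst (hd T)) then 1 else 0) \<le> length T"
  if "u \<noteq> v"
proof (induction "length T" arbitrary: T l rule: less_induct)
  case less
  show ?case
  proof (cases T)
    case Nil then show ?thesis by simp
  next
    case (Cons s L)
    show ?thesis
    proof (cases "2 \<le> length L \<and> fst s = u \<and> fst (L!0) = v \<and> fst (L!1) = u")
      case True
      then obtain s1 s2 L' where L: "L = s1 # s2 # L'"
        by (metis Suc_le_length_iff numeral_2_eq_2)
      have ih: "spl (Some v) (s2 # L') + 2 * uvu u v (s2 # L') + 1 \<le> length (s2 # L')"
        using less[of "s2 # L'" "Some v"] True L \<open>u \<noteq> v\<close> Cons by auto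
      have "uvu u v (s1 # s2 # L') = uvu u v (s2 # L')" using True L \<open>u\<noteq>v\<close> by simp
      then show ?thesis using ih True L Cons \<open>u\<noteq>v\<close> by auto
    next
      case False
      have ih: "spl (Some (fst s)) L + 2 * uvu u v L + (if L \<noteq> [] \<and> Some (fst s) \<noteq> Some (fst (hd L)) then 1 else 0) \<le> length L"
        using less[of L "Some (fst s)"] Cons by auto
      then show ?thesis using False Cons by auto
    qed
  qed
qed

section \<open>Projected extension\<close>

inductive pext :: "'a set \<Rightarrow> 'a \<Rightarrow> nat \<Rightarrow> ('a \<Rightarrow> nat) \<Rightarrow> nat \<Rightarrow> ('a \<times> nat) list
    \<Rightarrow> ('a \<times> nat) list \<Rightarrow> bool" for N y by0 where
  pe_same: "a = by0 \<Longrightarrow> pext N y by0 h a [] []"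
| pe_final: "a \<noteq> by0 \<Longrightarrow> pext N y by0 h a [] [(y, by0)]"
| pe_conf: "z \<in> N \<Longrightarrow> best_choice N by0 h (h(z := a)) (a # map snd T) b \<Longrightarrow>
     pext N y by0 (h(z := a)) b T Y \<Longrightarrow> pext N y by0 h a ((z, a) # T) ((y, b) # (z, a) # Y)"
| pe_pass: "z \<in> N \<Longrightarrow> c \<noteq> a \<Longrightarrow> pext N y by0 (h(z := c)) a T Y \<Longrightarrow>
     pext N y by0 h a ((z, c) # T) ((z, c) # Y)"

lemma valid_cong:
  assumes "\<forall>n\<in>N. g1 n = g2 n" "\<forall>n\<in>N. g1' n = g2' n"
  shows "valid_col N g1 g1' = valid_col N g2 g2'"
  using assms by (auto simp: valid_col_def fun_eq_iff)

lemma bc_cong: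
  assumes "\<forall>n\<in>N. g1 n = g2 n" "\<forall>n\<in>N. g1' n = g2' n"
  shows "best_choice N by0 g1 g1' fc b = best_choice N by0 g2 g2' fc b"
  unfolding best_choice_def valid_cong[OF assms] ..

lemma filter_ext: "bc_ext N y by0 g a S' S \<Longrightarrow> y \<notin> X \<Longrightarrow>
   filter (\<lambda>s. fst s \<in> X) S = filter (\<lambda>s. fst s \<in> X) S'"
  by (induction rule: bc_ext.induct) auto

lemma bc_ext_set: "bc_ext N y by0 g a S' S \<Longrightarrow> s \<in> set S \<Longrightarrow> s \<in> set S' \<or> fst s = y"
  by (induction arbitrary: s rule: bc_ext.induct) auto

lemma bc_ext_pext:
  "bc_ext N y by0 g a S' S \<Longrightarrow> y \<notin> N \<Longrightarrow> y \<notin> fst ` set S' \<Longrightarrow> (\<forall>n\<in>N. h n = g n) \<Longrightarrow>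
   pext N y by0 h a (filter (\<lambda>s. fst s \<in> N) S') (filter (\<lambda>s. fst s \<in> insert y N) S)"
proof (induction arbitrary: h rule: bc_ext.induct)
  case (ext_end_same a by0 N y g)
  then show ?case by (auto intro: pext.intros)
next
  case (ext_end_final a by0 N y g)
  then show ?case by (auto intro: pext.intros)
next
  case (ext_conflict v N c a by0 g rest b y out)
  have fc: "map snd (filter (\<lambda>s. fst s \<in> N) ((v, c) # rest)) = a # map snd (filter (\<lambda>s. fst s \<in> N) rest)"
    using ext_conflict by simp
  have bc: "best_choice N by0 h (h(v := a)) (a # map snd (filter (\<lambda>s. fst s \<in> N) rest)) b"
    using ext_conflict(3) ext_conflict(2) fc bc_cong[of N h g "h(v:=a)" "g(v:=a)"] ext_conflict.prems(3)
    by auto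
  have ih: "pext N y by0 (h(v := a)) b (filter (\<lambda>s. fst s \<in> N) rest) (filter (\<lambda>s. fst s \<in> insert y N) out)"
  proof -
    have agree: "\<forall>n\<in>N. (h(v := a)) n = (g(v := c)) n" using ext_conflict.prems(3) ext_conflict(2) by auto
    have "y \<notin> fst ` set rest" using ext_conflict.prems(2) by auto
    from ext_conflict.IH[OF ext_conflict.prems(1) this agree] show ?thesis .
  qed
  have "pext N y by0 h a ((v, a) # filter (\<lambda>s. fst s \<in> N) rest) ((y, b) # (v, a) # filter (\<lambda>s. fst s \<in> insert y N) out)"
    by (rule pe_conf[OF ext_conflict(1) bc ih])
  then show ?case using ext_conflict(1,2) by simp
next
  case (ext_pass v N c a y by0 g rest out)
  show ?case
  proof (cases "v \<in> N")
    case True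
    then have "c \<noteq> a" using ext_pass(1) by auto
    have ih: "pext N y by0 (h(v := c)) a (filter (\<lambda>s. fst s \<in> N) rest) (filter (\<lambda>s. fst s \<in> insert y N) out)"
    proof -
      have agree: "\<forall>n\<in>N. (h(v := c)) n = (g(v := c)) n" using ext_pass.prems(3) by auto
      have "y \<notin> fst ` set rest" using ext_pass.prems(2) by auto
      from ext_pass.IH[OF ext_pass.prems(1) this agree] show ?thesis .
    qed
    show ?thesis using pe_pass[OF True \<open>c \<noteq> a\<close> ih] True by simp
  next
    case False
    have "v \<noteq> y" using ext_pass.prems(2) by auto
    have ih: "pext N y by0 h a (filter (\<lambda>s. fst s \<in> N) rest) (filter (\<lambda>s. fst s \<in> insert y N) out)"
    proof -
      have agree: "\<forall>n\<in>N. h n = (g(v := c)) n" using ext_pass.prems(3) False by auto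
      have "y \<notin> fst ` set rest" using ext_pass.prems(2) by auto
      from ext_pass.IH[OF ext_pass.prems(1) this agree] show ?thesis .
    qed
    then show ?thesis using False \<open>v \<noteq> y\<close> by simp
  qed
qed

lemma bcr_vertices: "bcr V E ord \<alpha> \<beta> j S \<Longrightarrow> s \<in> set S \<Longrightarrow> \<exists>k. j \<le> k \<and> k < length ord \<and> fst s = ord ! k"
proof (induction arbitrary: s rule: bcr.induct)
  case (bcr_empty V E ord \<alpha> \<beta>)
  then show ?case by simp
next
  case (bcr_step V E ord \<alpha> \<beta> i S' S)
  from bc_ext_set[OF bcr_step(3) bcr_step.prems] show ?case
  proof
    assume "s \<in> set S'"
    then obtain k where "Suc i \<le> k" "k < length ord" "fst s = ord ! k" using bcr_step.IH by blast
    then show ?thesis by (intro exI[of _ k]) auto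
  next
    assume "fst s = ord ! i"
    then show ?thesis using bcr_step(2) by (intro exI[of _ i]) auto
  qed
qed

lemma bcr_stage:
  "bcr V E ord \<alpha> \<beta> j S \<Longrightarrow> j \<le> iy \<Longrightarrow> iy < length ord \<Longrightarrow>
   (\<forall>k. j \<le> k \<longrightarrow> k < iy \<longrightarrow> ord ! k \<notin> X) \<Longrightarrow>
   \<exists>S1 S0. bcr V E ord \<alpha> \<beta> (Suc iy) S1 \<and>
     bc_ext (out_nbrs E ord (ord ! iy)) (ord ! iy) (\<beta> (ord ! iy)) \<alpha> (\<alpha> (ord ! iy)) S1 S0 \<and>
     filter (\<lambda>s. fst s \<in> X) S = filter (\<lambda>s. fst s \<in> X) S0"
proof (induction rule: bcr.induct)
  case (bcr_empty V E ord \<alpha> \<beta>)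
  then show ?case by simp
next
  case (bcr_step V E ord \<alpha> \<beta> i S' S)
  show ?case
  proof (cases "iy = i")
    case True
    then show ?thesis using bcr_step by blast
  next
    case False
    then have "Suc i \<le> iy" using bcr_step.prems by auto
    then obtain S1 S0 where st: "bcr V E ord \<alpha> \<beta> (Suc iy) S1"
      "bc_ext (out_nbrs E ord (ord ! iy)) (ord ! iy) (\<beta> (ord ! iy)) \<alpha> (\<alpha> (ord ! iy)) S1 S0"
      "filter (\<lambda>s. fst s \<in> X) S' = filter (\<lambda>s. fst s \<in> X) S0"
      using bcr_step.IH bcr_step.prems by auto
    have "ord ! i \<notin> X" using bcr_step.prems \<open>Suc i \<le> iy\<close> by auto
    then have "filter (\<lambda>s. fst s \<in> X) S = filter (\<lambda>s. fst s \<in> X) S'"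
      using filter_ext[OF bcr_step(3)] by blast
    then show ?thesis using st by auto
  qed
qed

section \<open>Best choice gap\<close>

lemma bc_valid: "best_choice N by0 g g' fc b \<Longrightarrow> valid_col N g g' b"
  by (simp add: best_choice_def)

lemma bc_gap:
  assumes bc: "best_choice N by0 h (h(z:=a)) (a # map snd T) b" and z: "z \<in> N"
    and j: "j < length T" "snd (T!j) = b"
    and e: "valid_col N h (h(z:=a)) e" "e \<noteq> b"
  shows "e \<in> snd ` set (take j T)"
proof -
  let ?fc = "a # map snd T"
  have bin: "b \<in> set ?fc" using j by (auto simp: in_set_conv_nth intro!: exI[of _ j])
  have ea: "e \<noteq> a" using e z by (auto simp: valid_col_def)
  have c3: "(\<forall>b'. valid_col N h (h(z:=a)) b' \<longrightarrow> b' \<in> set ?fc) \<and>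
     (\<forall>b'. valid_col N h (h(z:=a)) b' \<longrightarrow>
      (LEAST k. k < length ?fc \<and> ?fc ! k = b') \<le> (LEAST k. k < length ?fc \<and> ?fc ! k = b))"
    using bc bin unfolding best_choice_def by (auto split: if_splits)
  then have ein: "e \<in> set ?fc" and le: "(LEAST k. k < length ?fc \<and> ?fc ! k = e) \<le> (LEAST k. k < length ?fc \<and> ?fc ! k = b)"
    using e by auto
  define le where "le = (LEAST k. k < length ?fc \<and> ?fc ! k = e)"
  define lb where "lb = (LEAST k. k < length ?fc \<and> ?fc ! k = b)"
  have "\<exists>k. k < length ?fc \<and> ?fc ! k = e" using ein by (simp only: in_set_conv_nth)
  then have le1: "le < length ?fc \<and> ?fc ! le = e"
    unfolding le_def by (rule LeastI_ex)
  have lb1: "lb \<le> Suc j" unfolding lb_def using j by (intro Least_le) simp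
  have "\<exists>k. k < length ?fc \<and> ?fc ! k = b" using bin by (simp only: in_set_conv_nth)
  then have lb2: "lb < length ?fc \<and> ?fc ! lb = b"
    unfolding lb_def by (rule LeastI_ex)
  have "le \<le> lb" using le unfolding le_def lb_def .
  moreover have "le \<noteq> lb" using le1 lb2 e(2) by auto
  moreover have "le \<noteq> 0" proof assume "le = 0" then show False using le1 ea by simp qed
  ultimately obtain k where k: "le = Suc k" "k < j" using lb1 by (cases le) auto
  then have "snd (T ! k) = e" using le1 by (auto simp: nth_map)
  moreover have "T ! k \<in> set (take j T)" using k j by (auto simp: in_set_conv_nth intro!: exI[of _ k])
  ultimately show ?thesis by force
qed

lemma ex_not_in5: "finite F \<Longrightarrow> card F < 5 \<Longrightarrow> \<exists>e::nat. e < 5 \<and> e \<notin> F"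
proof (rule ccontr)
  assume "finite F" "card F < 5" "\<not> (\<exists>e::nat. e < 5 \<and> e \<notin> F)"
  then have "{..<5} \<subseteq> F" by auto
  then have "card {..<(5::nat)} \<le> card F" using \<open>finite F\<close> by (rule card_mono[rotated])
  then show False using \<open>card F < 5\<close> by simp
qed

lemma valid_of: "e < 5 \<Longrightarrow> e \<notin> h ` N \<Longrightarrow> e \<noteq> a \<Longrightarrow> valid_col N h (h(z:=a)) e"
  by (auto simp: valid_col_def)

lemma ex_valid2:
  assumes "N \<subseteq> {n1, n2}"
  shows "\<exists>e. valid_col N h (h(z:=a)) e \<and> e \<noteq> b"
proof -
  have "card (set [h n1, h n2, a, b]) \<le> 4" using card_length[of "[h n1, h n2, a, b]"] by simp
  then obtain e where "e < 5" "e \<notin> set [h n1, h n2, a, b]" using ex_not_in5[of "set [h n1, h n2, a, b]"] by auto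
  then show ?thesis using assms by (intro exI[of _ e]) (auto simp: valid_col_def)
qed

lemma ex_valid1:
  shows "\<exists>e1 e2. valid_col {n} h (h(z:=a)) e1 \<and> valid_col {n} h (h(z:=a)) e2 \<and> e1 \<noteq> b \<and> e2 \<noteq> b \<and> e1 \<noteq> e2"
proof -
  have "card (set [h n, a, b]) \<le> 3" using card_length[of "[h n, a, b]"] by simp
  then obtain e1 where e1: "e1 < 5" "e1 \<notin> set [h n, a, b]" using ex_not_in5[of "set [h n, a, b]"] by auto
  have "card (set [e1, h n, a, b]) \<le> 4" using card_length[of "[e1, h n, a, b]"] by simp
  then obtain e2 where e2: "e2 < 5" "e2 \<notin> set [e1, h n, a, b]" using ex_not_in5[of "set [e1, h n, a, b]"] by auto
  show ?thesis using e1 e2 by (intro exI[of _ e1] exI[of _ e2]) (auto simp: valid_col_def)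
qed

lemma conf_next:
  assumes bc: "best_choice N by0 h (h(z:=a)) (a # map snd T) b" and z: "z \<in> N" and N: "N \<subseteq> {n1, n2}"
    and T: "T \<noteq> []"
  shows "snd (hd T) \<noteq> b"
proof
  assume h: "snd (hd T) = b"
  obtain e where e: "valid_col N h (h(z:=a)) e" "e \<noteq> b" using ex_valid2[OF N] by blast
  have "e \<in> snd ` set (take 0 T)" using bc_gap[OF bc z _ _ e, of 0] T h by (simp add: hd_conv_nth)
  then show False by simp
qed

lemma conf_next2:
  assumes bc: "best_choice N by0 h (h(z:=a)) (a # map snd T) b" and z: "z \<in> N" and N: "N \<subseteq> {n1, n2}"
    and T: "2 \<le> length T" and nv: "snd (T!0) = h n" "n \<in> N"
  shows "snd (T!1) \<noteq> b"
proof
  assume h: "snd (T!1) = b"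
  obtain e where e: "valid_col N h (h(z:=a)) e" "e \<noteq> b" using ex_valid2[OF N] by blast
  have "e \<in> snd ` set (take 1 T)" using bc_gap[OF bc z _ _ e, of 1] T h by simp
  moreover have "take 1 T = [T!0]" using T by (cases T) auto
  ultimately have "e = h n" using nv by simp
  then show False using e(1) nv(2) by (auto simp: valid_col_def)
qed

lemma conf_next1:
  assumes bc: "best_choice {n} by0 h (h(z:=a)) (a # map snd T) b" and z: "z \<in> {n}"
    and j: "j < length T" "j < 2"
  shows "snd (T!j) \<noteq> b"
proof
  assume h: "snd (T!j) = b"
  obtain e1 e2 where e: "valid_col {n} h (h(z:=a)) e1" "valid_col {n} h (h(z:=a)) e2" "e1 \<noteq> b" "e2 \<noteq> b" "e1 \<noteq> e2"
    using ex_valid1[of n h z a b] by blast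
  have i1: "e1 \<in> snd ` set (take j T)" by (rule bc_gap[OF bc z j(1) h e(1,3)])
  have i2: "e2 \<in> snd ` set (take j T)" by (rule bc_gap[OF bc z j(1) h e(2,4)])
  have sub: "snd ` set (take j T) \<subseteq> {snd (T!0)}"
  proof (cases j)
    case 0 then show ?thesis by simp
  next
    case (Suc k)
    then have "j = 1" using j by simp
    moreover obtain t0 T' where "T = t0 # T'" using j by (cases T) auto
    ultimately show ?thesis by simp
  qed
  have "e1 = snd (T!0)" using i1 sub by blast
  moreover have "e2 = snd (T!0)" using i2 sub by blast
  ultimately show False using e(5) by simp
qed

definition ny :: "'a \<Rightarrow> ('a \<times> nat) list \<Rightarrow> nat" where
  "ny y Y = length (filter (\<lambda>s. fst s = y) Y)"

lemma ny_simps[simp]: "ny y [] = 0" "ny y (s # Y) = (if fst s = y then 1 else 0) + ny y Y"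
  by (auto simp: ny_def)



definition px :: "'a \<Rightarrow> 'a \<Rightarrow> 'a \<Rightarrow> nat \<Rightarrow> ('a \<times> nat) list \<Rightarrow> ('a \<times> nat) list \<Rightarrow> int" where
  "px u v y cu T Y = int (tvl u v cu T) + 2 * int (ny y Y) - int (length T)"

lemma psi_x:
  assumes "pext N y by0 h a T Y" "N = {u,v}" "y \<notin> N" "\<forall>n\<in>N. h n \<noteq> a" "u \<noteq> v"
  shows "px u v y (h u) T Y \<le> 3
   \<and> ((T = [] \<or> snd (hd T) \<noteq> a) \<longrightarrow> px u v y (h u) T Y \<le> 2)
   \<and> ((T \<noteq> [] \<and> fst (hd T) = v \<and> snd (hd T) \<noteq> a \<and> (2 \<le> length T \<longrightarrow> snd (T!1) \<noteq> a))
        \<longrightarrow> px u v y (h u) T Y \<le> 1)"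
  using assms
proof (induction rule: pext.induct)
  case (pe_same a h)
  then show ?case by (simp add: px_def)
next
  case (pe_final a h)
  then show ?case by (simp add: px_def)
next
  case (pe_conf z h a T b Y)
  have inv: "\<forall>n\<in>N. (h(z:=a)) n \<noteq> b" using bc_valid[OF pe_conf(2)] unfolding valid_col_def by blast
  have IH: "px u v y ((h(z:=a)) u) T Y \<le> 3"
    "(T = [] \<or> snd (hd T) \<noteq> b) \<Longrightarrow> px u v y ((h(z:=a)) u) T Y \<le> 2"
    "T \<noteq> [] \<and> fst (hd T) = v \<and> snd (hd T) \<noteq> b \<and> (2 \<le> length T \<longrightarrow> snd (T!1) \<noteq> b) \<Longrightarrow> px u v y ((h(z:=a)) u) T Y \<le> 1"
    using pe_conf.IH[OF pe_conf.prems(1,2) inv pe_conf.prems(4)] by blast+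
  have zy: "z \<noteq> y" using pe_conf(1) pe_conf.prems by auto
  have Nsub: "N \<subseteq> {u, v}" using pe_conf.prems by simp
  have ny: "ny y ((y, b) # (z, a) # Y) = 1 + ny y Y" using zy by simp
  have hd: "\<not> (((z, a) # T) = [] \<or> snd (hd ((z, a) # T)) \<noteq> a)" by simp
  have hd2: "\<not> (((z, a) # T) \<noteq> [] \<and> fst (hd ((z, a) # T)) = v \<and> snd (hd ((z, a) # T)) \<noteq> a \<and> P)" for P by simp
  have main: "px u v y (h u) ((z, a) # T) ((y, b) # (z, a) # Y) \<le> 3"
  proof (cases "z = u \<and> T \<noteq> [] \<and> fst (hd T) = v \<and> snd (hd T) = h u")
    case True
    then obtain s2 T' where T: "T = s2 # T'" by (cases T) auto
    have tv: "tvl u v (h u) ((z, a) # T) = 1 + tvl u v ((h(z:=a)) u) T"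
      using True by (simp only: tvl_cons) simp
    have bu: "b \<noteq> h u" using bc_valid[OF pe_conf(2)] pe_conf.prems(1) unfolding valid_col_def by blast
    have "2 \<le> length T \<longrightarrow> snd (T!1) \<noteq> b"
      using conf_next2[OF pe_conf(2) pe_conf(1) Nsub, of u] True T pe_conf.prems(1) by (auto simp: hd_conv_nth)
    then have "px u v y ((h(z:=a)) u) T Y \<le> 1"
      using IH(3) True bu by blast
    then show ?thesis using tv ny unfolding px_def by simp
  next
    case False
    have tv: "tvl u v (h u) ((z, a) # T) = tvl u v ((h(z:=a)) u) T"
      using False by (simp only: tvl_cons) auto
    have "T = [] \<or> snd (hd T) \<noteq> b" using conf_next[OF pe_conf(2) pe_conf(1) Nsub] by blast
    then have "px u v y ((h(z:=a)) u) T Y \<le> 2"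
      using IH(2) by blast
    then show ?thesis using tv ny unfolding px_def by simp
  qed
  show ?case using main hd hd2 by blast
next
  case (pe_pass z c a h T Y)
  have inv: "\<forall>n\<in>N. (h(z:=c)) n \<noteq> a" using pe_pass.prems(3) pe_pass(2) by auto
  have IH: "px u v y ((h(z:=c)) u) T Y \<le> 3"
    "(T = [] \<or> snd (hd T) \<noteq> a) \<Longrightarrow> px u v y ((h(z:=c)) u) T Y \<le> 2"
    using pe_pass.IH[OF pe_pass.prems(1,2) inv pe_pass.prems(4)] by blast+
  have zy: "z \<noteq> y" using pe_pass(1) pe_pass.prems by auto
  have ny: "ny y ((z, c) # Y) = ny y Y" using zy by simp
  define \<delta> where "\<delta> = (if z = u \<and> T \<noteq> [] \<and> fst (hd T) = v \<and> snd (hd T) = h u then 1 else (0::nat))"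
  have tv: "tvl u v (h u) ((z, c) # T) = \<delta> + tvl u v ((h(z:=c)) u) T"
    unfolding \<delta>_def by (simp only: tvl_cons) simp
  have pxe: "px u v y (h u) ((z, c) # T) ((z, c) # Y) = int \<delta> - 1 + px u v y ((h(z:=c)) u) T Y"
    using tv ny unfolding px_def by simp
  have d01: "\<delta> \<le> 1" unfolding \<delta>_def by simp
  have c1: "px u v y (h u) ((z, c) # T) ((z, c) # Y) \<le> 3"
    using IH(1) pxe d01 by linarith
  have c2: "px u v y (h u) ((z, c) # T) ((z, c) # Y) \<le> 2"
  proof (cases "\<delta> = 1")
    case True
    then have "T \<noteq> [] \<and> snd (hd T) = h u" "u \<in> N"
      using pe_pass.prems(1) unfolding \<delta>_def by (auto split: if_splits)
    then have "snd (hd T) \<noteq> a" using pe_pass.prems(3) by auto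
    then show ?thesis using IH(2) pxe True by simp
  next
    case False
    then have "\<delta> = 0" unfolding \<delta>_def by (auto split: if_splits)
    then show ?thesis using IH(1) pxe by simp
  qed
  have c3: "px u v y (h u) ((z, c) # T) ((z, c) # Y) \<le> 1"
    if a: "fst (hd ((z, c) # T)) = v" "2 \<le> length ((z, c) # T) \<longrightarrow> snd (((z, c) # T)!1) \<noteq> a"
  proof -
    have "\<delta> = 0" unfolding \<delta>_def using pe_pass.prems(4) a(1) by auto
    moreover have "T = [] \<or> snd (hd T) \<noteq> a" using a(2) by (cases T) auto
    ultimately show ?thesis using IH(2) pxe by simp
  qed
  show ?case using c1 c2 c3 by simp
qed

lemma pext_shape:
  assumes "pext N y by0 h a ((z1,c1)#(z2,c2)#T) R" "c1 \<noteq> a" "c2 = a"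
  shows "3 \<le> length R \<and> R!0 = (z1,c1) \<and> fst (R!1) = y"
proof -
  from assms(1) obtain R1 where R: "R = (z1,c1) # R1" and p1: "pext N y by0 (h(z1:=c1)) a ((z2,c2)#T) R1"
    using assms(2) by (cases rule: pext.cases) auto
  from p1 obtain b R2 where "R1 = (y,b) # (z2,c2) # R2"
    using assms(3) by (cases rule: pext.cases) auto
  then show ?thesis using R by simp
qed

lemma pcl_cons: "pcl u w v (s # L) = (if 3 \<le> length L \<and> fst s = u \<and> fst (L!0) = w \<and> fst (L!1) = v \<and> fst (L!2) = u
     then 1 else 0) + pcl u w v L"
  by simp

definition pu :: "'a \<Rightarrow> 'a \<Rightarrow> 'a \<Rightarrow> nat \<Rightarrow> ('a \<times> nat) list \<Rightarrow> ('a \<times> nat) list \<Rightarrow> int" where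
  "pu u v w cu T R = 4 * int (ny u R) - 2 * int (tvl u v cu R) - int (ny v T) - 2 * int (ny w T) - int (pcl u w v R)"

lemma psi_u:
  assumes "pext N u by0 h a T R" "N = {v,w}" "u \<notin> N" "\<forall>n\<in>N. h n \<noteq> a" "v \<noteq> w"
  shows "pu u v w a T R \<le> 6
   \<and> ((T = [] \<or> snd (hd T) \<noteq> a) \<longrightarrow> pu u v w a T R \<le> 5)
   \<and> ((T = [] \<or> (snd (hd T) \<noteq> a \<and> \<not> (fst (hd T) = v \<and> 2 \<le> length T \<and> snd (T!1) = a)))
        \<longrightarrow> pu u v w a T R \<le> 4)"
  using assms
proof (induction rule: pext.induct)
  case (pe_same a h)
  then show ?case by (simp add: pu_def)
next
  case (pe_final a h)
  then show ?case by (simp add: pu_def)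
next
  case (pe_conf z h a T b Y)
  have inv: "\<forall>n\<in>N. (h(z:=a)) n \<noteq> b" using bc_valid[OF pe_conf(2)] unfolding valid_col_def by blast
  have IH: "pu u v w b T Y \<le> 6"
    "(T = [] \<or> snd (hd T) \<noteq> b) \<Longrightarrow> pu u v w b T Y \<le> 5"
    "(T = [] \<or> (snd (hd T) \<noteq> b \<and> \<not> (fst (hd T) = v \<and> 2 \<le> length T \<and> snd (T!1) = b))) \<Longrightarrow> pu u v w b T Y \<le> 4"
    using pe_conf.IH[OF pe_conf.prems(1,2) inv pe_conf.prems(4)] by blast+
  have zu: "z \<noteq> u" using pe_conf(1) pe_conf.prems by auto
  have Nsub: "N \<subseteq> {v, w}" using pe_conf.prems by simp
  have zvw: "z = v \<or> z = w" using pe_conf(1) pe_conf.prems(1) by auto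
  have nxt: "T = [] \<or> snd (hd T) \<noteq> b" using conf_next[OF pe_conf(2) pe_conf(1) Nsub] by blast
  define pat where "pat = (if 3 \<le> length ((z, a) # Y) \<and> fst (((z,a) # Y)!0) = w \<and> fst (((z,a) # Y)!1) = v \<and> fst (((z,a) # Y)!2) = u then 1 else (0::nat))"
  have pc: "pcl u w v ((u, b) # (z, a) # Y) = pat + pcl u w v Y"
    unfolding pat_def using zu by simp
  have tv: "tvl u v a ((u, b) # (z, a) # Y) = (if z = v then 1 else 0) + tvl u v b Y"
    using zu by (simp add: tvl_cons)
  have e: "pu u v w a ((z, a) # T) ((u, b) # (z, a) # Y) =
      4 - 3 * int (if z = v then 1 else 0) - 2 * int (if z = w then 1 else 0) - int pat + pu u v w b T Y"
    unfolding pu_def using pc tv zu by simp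
  have main: "pu u v w a ((z, a) # T) ((u, b) # (z, a) # Y) \<le> 6"
  proof (cases "z = v")
    case True
    then have "z \<noteq> w" using pe_conf.prems(4) by simp
    then show ?thesis using e True IH(2)[OF nxt] by simp
  next
    case False
    then have zw: "z = w" using zvw by simp
    show ?thesis
    proof (cases "T \<noteq> [] \<and> fst (hd T) = v \<and> 2 \<le> length T \<and> snd (T!1) = b")
      case True
      then obtain z1 c1 z2 c2 T3 where T: "T = (z1,c1) # (z2,c2) # T3"
        by (metis Suc_le_length_iff numeral_2_eq_2 prod.collapse)
      have "c1 \<noteq> b" using nxt T by simp
      moreover have "c2 = b" using True T by simp
      moreover have "pext N u by0 (h(z:=a)) b ((z1,c1) # (z2,c2) # T3) Y" using pe_conf(3) T by simp
      ultimately have "3 \<le> length Y \<and> Y!0 = (z1,c1) \<and> fst (Y!1) = u"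
        using pext_shape by metis
      then have "pat = 1" unfolding pat_def using zw True T by simp
      then show ?thesis using e zw IH(2)[OF nxt] False by simp
    next
      case False
      then have "T = [] \<or> (snd (hd T) \<noteq> b \<and> \<not> (fst (hd T) = v \<and> 2 \<le> length T \<and> snd (T!1) = b))"
        using nxt by auto
      then show ?thesis using e zw IH(3) \<open>z \<noteq> v\<close> by simp
    qed
  qed
  show ?case using main by simp
next
  case (pe_pass z c a h T Y)
  have inv: "\<forall>n\<in>N. (h(z:=c)) n \<noteq> a" using pe_pass.prems(3) pe_pass(2) by auto
  have IH: "pu u v w a T Y \<le> 6"
    "(T = [] \<or> snd (hd T) \<noteq> a) \<Longrightarrow> pu u v w a T Y \<le> 5"
    using pe_pass.IH[OF pe_pass.prems(1,2) inv pe_pass.prems(4)] by blast+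
  have zu: "z \<noteq> u" using pe_pass(1) pe_pass.prems by auto
  have zvw: "z = v \<or> z = w" using pe_pass(1) pe_pass.prems(1) by auto
  have tv: "tvl u v a ((z, c) # Y) = tvl u v a Y"
    using zu by (simp add: tvl_cons)
  have e: "pu u v w a ((z, c) # T) ((z, c) # Y) =
      - int (if z = v then 1 else 0) - 2 * int (if z = w then 1 else 0) + pu u v w a T Y"
    unfolding pu_def using tv zu by simp
  show ?case
  proof (cases "z = v")
    case True
    then have "z \<noteq> w" using pe_pass.prems(4) by simp
    have c3: "pu u v w a ((z, c) # T) ((z, c) # Y) \<le> 4"
      if "\<not> (2 \<le> length ((z, c) # T) \<and> snd (((z, c) # T)!1) = a)"
    proof -
      have "T = [] \<or> snd (hd T) \<noteq> a" using that by (cases T) auto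
      then show ?thesis using e True \<open>z \<noteq> w\<close> IH(2) by simp
    qed
    show ?thesis using e True \<open>z \<noteq> w\<close> IH(1) c3 by simp
  next
    case False
    then have "z = w" using zvw by simp
    then show ?thesis using e False IH(1) by simp
  qed
qed

lemma psi_u1:
  assumes "pext {v} u by0 h a T R" "u \<noteq> v"
  shows "3 * ny u R \<le> length T + 5
   \<and> ((T = [] \<or> snd (hd T) \<noteq> a) \<longrightarrow> 3 * ny u R \<le> length T + 4)
   \<and> ((\<forall>j<2. j < length T \<longrightarrow> snd (T!j) \<noteq> a) \<longrightarrow> 3 * ny u R \<le> length T + 3)"
  using assms
proof (induction rule: pext.induct)
  case (pe_same a h)
  then show ?case by simp
next
  case (pe_final a h)
  then show ?case by simp
next
  case (pe_conf z h a T b Y)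
  have "\<forall>j<2. j < length T \<longrightarrow> snd (T!j) \<noteq> b"
    using conf_next1[OF pe_conf(2) pe_conf(1)] by blast
  then have "3 * ny u Y \<le> length T + 3" using pe_conf.IH pe_conf.prems by blast
  moreover have "z \<noteq> u" using pe_conf(1) pe_conf.prems by auto
  ultimately show ?case by (auto dest!: spec[of _ 0])
next
  case (pe_pass z c a h T Y)
  have IH: "3 * ny u Y \<le> length T + 5" "(T = [] \<or> snd (hd T) \<noteq> a) \<Longrightarrow> 3 * ny u Y \<le> length T + 4"
    using pe_pass.IH pe_pass.prems by blast+
  have "z \<noteq> u" using pe_pass(1) pe_pass.prems by auto
  moreover have "(\<forall>j<2. j < length ((z, c) # T) \<longrightarrow> snd (((z, c) # T)!j) \<noteq> a) \<Longrightarrow> T = [] \<or> snd (hd T) \<noteq> a"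
    by (cases T) (auto dest: spec[of _ 1])
  ultimately show ?case using IH by auto
qed

definition cols :: "'a \<Rightarrow> ('a \<times> nat) list \<Rightarrow> nat list" where
  "cols y Y = map snd (filter (\<lambda>s. fst s = y) Y)"

definition pb :: "'a \<Rightarrow> nat option \<Rightarrow> nat option \<Rightarrow> 'a option \<Rightarrow> ('a \<times> nat) list \<Rightarrow> ('a \<times> nat) list \<Rightarrow> int" where
  "pb y p q l T Y = int (bw p q (cols y Y)) + 2 * int (ny y Y) - int (length T) - int (spl l T)"

definition bnow :: "nat option \<Rightarrow> nat option \<Rightarrow> nat \<Rightarrow> nat" where
  "bnow p q x = (case p of None \<Rightarrow> 0 | Some p' \<Rightarrow> (case q of None \<Rightarrow> 0 | Some q' \<Rightarrow>
     (if \<not> (p' \<noteq> q' \<and> p' \<noteq> x \<and> q' \<noteq> x) then 1 else 0)))"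

lemma bw_cons: "bw p q (x # L) = bnow p q x + bw q (Some x) L"
  by (simp add: bnow_def)

lemma bnow_le: "bnow p q x \<le> 1"
  by (auto simp: bnow_def split: option.splits)

lemma psi_b:
  assumes "pext N y by0 h a T Y" "N = {u,v}" "y \<notin> N" "\<forall>n\<in>N. h n \<noteq> a"
  shows "(q = None \<or> q = Some a) \<longrightarrow> pb y p q l T Y \<le> 5
   \<and> (\<forall>z0. (p = None \<or> p = Some (h z0)) \<and> z0 \<in> N \<and> l = Some z0 \<and> (T = [] \<or> snd (hd T) \<noteq> a) \<longrightarrow> pb y p q l T Y \<le> 3)
   \<and> (\<forall>z0. (p = None \<or> p = Some (h z0)) \<and> z0 \<in> N \<and> l \<noteq> Some z0 \<longrightarrow> pb y p q l T Y \<le> 4)"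
  using assms
proof (induction arbitrary: p q l rule: pext.induct)
  case (pe_same a h)
  then show ?case by (simp add: pb_def cols_def)
next
  case (pe_final a h)
  have "bw p q [by0] \<le> 1" using bw_le[of p q "[by0]"] by simp
  then show ?case by (simp add: pb_def cols_def)
next
  case (pe_conf z h a T b Y)
  show ?case
  proof (intro impI)
  assume qa0: "q = None \<or> q = Some a"
  have vb: "valid_col N h (h(z:=a)) b" by (rule bc_valid[OF pe_conf(2)])
  have inv: "\<forall>n\<in>N. (h(z:=a)) n \<noteq> b" using vb unfolding valid_col_def by blast
  have ab: "a \<noteq> b" using vb pe_conf(1) unfolding valid_col_def by auto
  have zy: "z \<noteq> y" using pe_conf(1) pe_conf.prems by auto
  have Nsub: "N \<subseteq> {u, v}" using pe_conf.prems by simp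
  have nxt: "T = [] \<or> snd (hd T) \<noteq> b" using conf_next[OF pe_conf(2) pe_conf(1) Nsub] by blast
  have qa: "q = None \<or> q = Some ((h(z:=a)) z)" using qa0 by simp
  have IH2: "pb y q (Some b) (Some z) T Y \<le> 3"
    using pe_conf.IH[OF pe_conf.prems(1,2) inv, of "Some b" q "Some z"] qa pe_conf(1) nxt by blast
  have e: "pb y p q l ((z, a) # T) ((y, b) # (z, a) # Y) =
     int (bnow p q b) + 1 - int (if l = Some z then 1 else 0) + pb y q (Some b) (Some z) T Y"
    unfolding pb_def cols_def using zy by (simp add: bw_cons bnow_def)
  have c1: "pb y p q l ((z, a) # T) ((y, b) # (z, a) # Y) \<le> 5"
    using e IH2 bnow_le[of p q b] by simp
  have c3: "pb y p q l ((z, a) # T) ((y, b) # (z, a) # Y) \<le> 4"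
    if "p = None \<or> p = Some (h z0)" "z0 \<in> N" for z0
  proof -
    have "h z0 \<noteq> a" using pe_conf.prems(3) that(2) by auto
    moreover have "h z0 \<noteq> b" using vb that(2) unfolding valid_col_def by auto
    ultimately have "bnow p q b = 0" using that(1) qa0 ab by (auto simp: bnow_def)
    then show ?thesis using e IH2 by simp
  qed
  show "pb y p q l ((z, a) # T) ((y, b) # (z, a) # Y) \<le> 5
   \<and> (\<forall>z0. (p = None \<or> p = Some (h z0)) \<and> z0 \<in> N \<and> l = Some z0 \<and> (((z, a) # T) = [] \<or> snd (hd ((z, a) # T)) \<noteq> a) \<longrightarrow> pb y p q l ((z, a) # T) ((y, b) # (z, a) # Y) \<le> 3)
   \<and> (\<forall>z0. (p = None \<or> p = Some (h z0)) \<and> z0 \<in> N \<and> l \<noteq> Some z0 \<longrightarrow> pb y p q l ((z, a) # T) ((y, b) # (z, a) # Y) \<le> 4)"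
    using c1 c3 by auto
  qed
next
  case (pe_pass z c a h T Y)
  show ?case
  proof (intro impI)
  assume qa0: "q = None \<or> q = Some a"
  have inv: "\<forall>n\<in>N. (h(z:=c)) n \<noteq> a" using pe_pass.prems(3) pe_pass(2) by auto
  note IH = pe_pass.IH[OF pe_pass.prems(1,2) inv]
  have zy: "z \<noteq> y" using pe_pass(1) pe_pass.prems by auto
  have e: "pb y p q l ((z, c) # T) ((z, c) # Y) = - 1 - int (if l = Some z then 1 else 0) + pb y p q (Some z) T Y"
    unfolding pb_def cols_def using zy by simp
  have IH1: "pb y p q (Some z) T Y \<le> 5" using IH[where p=p and q=q and l="Some z"] qa0 by blast
  have IH3: "pb y p q (Some z) T Y \<le> 4" if "p = None \<or> p = Some (h z0)" "z0 \<in> N" "z \<noteq> z0" for z0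
  proof -
    have pz: "p = None \<or> p = Some ((h(z:=c)) z0)" using that by auto
    have A: "\<forall>z0'. (p = None \<or> p = Some ((h(z:=c)) z0')) \<and> z0' \<in> N \<and> Some z \<noteq> Some z0' \<longrightarrow> pb y p q (Some z) T Y \<le> 4"
      using IH[where p=p and q=q and l="Some z"] qa0 by blast
    show ?thesis using A[rule_format, of z0] pz that(2,3) by blast
  qed
  have c1: "pb y p q l ((z, c) # T) ((z, c) # Y) \<le> 5" using e IH1 by simp
  have c2: "pb y p q l ((z, c) # T) ((z, c) # Y) \<le> 3"
    if "p = None \<or> p = Some (h z0)" "z0 \<in> N" "l = Some z0" for z0
  proof (cases "z = z0")
    case True then show ?thesis using e IH1 that by simp
  next
    case False then show ?thesis using e IH3[OF that(1,2) False] that by simp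
  qed
  have c3: "pb y p q l ((z, c) # T) ((z, c) # Y) \<le> 4"
    if "p = None \<or> p = Some (h z0)" "z0 \<in> N" "l \<noteq> Some z0" for z0
  proof (cases "z = z0")
    case True then show ?thesis using e IH1 that by simp
  next
    case False then show ?thesis using e IH3[OF that(1,2) False] that by simp
  qed
  show "pb y p q l ((z, c) # T) ((z, c) # Y) \<le> 5
   \<and> (\<forall>z0. (p = None \<or> p = Some (h z0)) \<and> z0 \<in> N \<and> l = Some z0 \<and> (((z, c) # T) = [] \<or> snd (hd ((z, c) # T)) \<noteq> a) \<longrightarrow> pb y p q l ((z, c) # T) ((z, c) # Y) \<le> 3)
   \<and> (\<forall>z0. (p = None \<or> p = Some (h z0)) \<and> z0 \<in> N \<and> l \<noteq> Some z0 \<longrightarrow> pb y p q l ((z, c) # T) ((z, c) # Y) \<le> 4)"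
    using c1 c2 c3 by blast
  qed
qed

lemma out_nbr_idx:
  assumes "distinct ord" "i < length ord" "ord ! i = y" "n \<in> out_nbrs E ord y"
  shows "\<exists>j. i < j \<and> j < length ord \<and> ord ! j = n \<and> E y n"
proof -
  obtain i' j where ij: "i' < j" "j < length ord" "ord ! i' = y" "ord ! j = n" "E y n"
    using assms(4) unfolding out_nbrs_def by blast
  have "i' = i" using assms(1,2,3) ij by (metis nth_eq_iff_index_eq order.strict_trans)
  then show ?thesis using ij by blast
qed

lemma filter_sub: "N \<subseteq> X \<Longrightarrow> filter (\<lambda>s. fst s \<in> N) (filter (\<lambda>s. fst s \<in> X) L) = filter (\<lambda>s. fst s \<in> N) L"
  by (induction L) auto

lemma stage_pext:
  assumes bcr: "bcr V E ord \<alpha> \<beta> 0 S" and dist: "distinct ord" and iy: "iy < length ord"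
    and pr: "proper_5col V E \<alpha>"
  defines "y \<equiv> ord ! iy" and "N \<equiv> out_nbrs E ord (ord ! iy)"
  shows "pext N y (\<beta> y) \<alpha> (\<alpha> y) (filter (\<lambda>s. fst s \<in> N) S) (filter (\<lambda>s. fst s \<in> insert y N) S)
    \<and> (\<forall>n\<in>N. \<alpha> n \<noteq> \<alpha> y) \<and> y \<notin> N"
proof -
  have Nidx: "\<And>n. n \<in> N \<Longrightarrow> \<exists>j. iy < j \<and> j < length ord \<and> ord ! j = n \<and> E y n"
    using out_nbr_idx[OF dist iy] unfolding N_def y_def by blast
  have yN: "y \<notin> N"
  proof
    assume "y \<in> N"
    then obtain j where "iy < j" "j < length ord" "ord ! j = y" using Nidx by blast
    then show False using dist iy unfolding y_def by (simp add: nth_eq_iff_index_eq)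
  qed
  have notX: "\<forall>k. 0 \<le> k \<longrightarrow> k < iy \<longrightarrow> ord ! k \<notin> insert y N"
  proof (intro allI impI)
    fix k assume "0 \<le> k" "k < iy"
    have "ord ! k \<noteq> y" using dist iy \<open>k < iy\<close> unfolding y_def by (simp add: nth_eq_iff_index_eq)
    moreover have "ord ! k \<notin> N"
    proof
      assume "ord ! k \<in> N"
      then obtain j where "iy < j" "j < length ord" "ord ! j = ord ! k" using Nidx by blast
      then show False using dist iy \<open>k < iy\<close> by (simp add: nth_eq_iff_index_eq)
    qed
    ultimately show "ord ! k \<notin> insert y N" by simp
  qed
  obtain S1 S0 where st: "bcr V E ord \<alpha> \<beta> (Suc iy) S1"
      "bc_ext N y (\<beta> y) \<alpha> (\<alpha> y) S1 S0"
      "filter (\<lambda>s. fst s \<in> insert y N) S = filter (\<lambda>s. fst s \<in> insert y N) S0"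
    using bcr_stage[OF bcr _ iy notX] unfolding N_def y_def by blast
  have yS1: "y \<notin> fst ` set S1"
  proof
    assume "y \<in> fst ` set S1"
    then obtain s where "s \<in> set S1" "fst s = y" by blast
    then obtain k where "Suc iy \<le> k" "k < length ord" "ord ! k = y" using bcr_vertices[OF st(1)] by metis
    then show False using dist iy unfolding y_def by (simp add: nth_eq_iff_index_eq)
  qed
  have fN: "filter (\<lambda>s. fst s \<in> N) S = filter (\<lambda>s. fst s \<in> N) S1"
  proof -
    have "filter (\<lambda>s. fst s \<in> N) S = filter (\<lambda>s. fst s \<in> N) (filter (\<lambda>s. fst s \<in> insert y N) S)"
      by (rule filter_sub[symmetric]) auto
    also have "\<dots> = filter (\<lambda>s. fst s \<in> N) (filter (\<lambda>s. fst s \<in> insert y N) S0)" using st(3) by simp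
    also have "\<dots> = filter (\<lambda>s. fst s \<in> N) S0" by (rule filter_sub) auto
    also have "\<dots> = filter (\<lambda>s. fst s \<in> N) S1" by (rule filter_ext[OF st(2) yN])
    finally show ?thesis .
  qed
  have "pext N y (\<beta> y) \<alpha> (\<alpha> y) (filter (\<lambda>s. fst s \<in> N) S1) (filter (\<lambda>s. fst s \<in> insert y N) S0)"
    using bc_ext_pext[OF st(2) yN yS1] by blast
  moreover have "\<forall>n\<in>N. \<alpha> n \<noteq> \<alpha> y"
    using Nidx pr unfolding proper_5col_def by metis
  ultimately show ?thesis using fN st(3) yN by simp
qed

lemma ny_filter: "y \<in> X \<Longrightarrow> ny y (filter (\<lambda>s. fst s \<in> X) S) = num_recol S y"
  unfolding ny_def num_recol_def colors_of_def restrict_seq_def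
  by (induction S) auto

lemma cols_filter: "y \<in> X \<Longrightarrow> cols y (filter (\<lambda>s. fst s \<in> X) S) = colors_of S y"
  unfolding cols_def colors_of_def restrict_seq_def
  by (induction S) auto

lemma len_filter2: "u \<noteq> v \<Longrightarrow> length (filter (\<lambda>s. fst s \<in> {u,v}) L) = ny u L + ny v L"
  by (induction L) auto

lemma ny_num: "ny y S = num_recol S y"
  unfolding ny_def num_recol_def colors_of_def restrict_seq_def by (induction S) auto

lemma len_cols: "length (cols y Y) = ny y Y"
  by (simp add: cols_def ny_def)

theorem lemma5:
  fixes V :: "'a set" and E :: "'a \<Rightarrow> 'a \<Rightarrow> bool" and ord :: "'a list"
    and \<alpha> \<beta> :: "'a \<Rightarrow> nat" and S :: "('a \<times> nat) list"
    and x u v w :: 'a and i :: nat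
  assumes "simple_graph V E"
    and "chordal V E"
    and "clique_number V E = 3"
    and "perfect_elim_ordering V E ord"
    and "proper_5col V E \<alpha>" and "proper_5col V E \<beta>"
    and "best_choice_recoloring V E ord \<alpha> \<beta> S"
    and "x \<in> V" and "u \<in> V" and "v \<in> V" and "w \<in> V"
    and "out_nbrs E ord x = {u, v}" and "out_nbrs E ord u = {v, w}"
    and "i < length ord" and "ord ! i = x"
    and "int (num_recol S x)
           \<ge> int (Max {num_recol S (ord ! i') | i'. i < i' \<and> i' < length ord}) - 1"
  shows "int (pattern_count (restrict_seq S {u, v, w}) u w v)
           \<ge> int (Max {num_recol S (ord ! i') | i'. i < i' \<and> i' < length ord}) - 34
         \<and> bad_triples (colors_of S x) \<le> 74"
proof -
  note a = assms
  have dist: "distinct ord" using assms(4) unfolding perfect_elim_ordering_def by blast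
  have bcr: "bcr V E ord \<alpha> \<beta> 0 S" using assms(7) unfolding best_choice_recoloring_def by blast
  have uN: "u \<in> out_nbrs E ord x" "v \<in> out_nbrs E ord x" using assms(12) by auto
  have vN: "v \<in> out_nbrs E ord u" "w \<in> out_nbrs E ord u" using assms(13) by auto
  obtain iu where iu: "i < iu" "iu < length ord" "ord ! iu = u"
    using out_nbr_idx[OF dist assms(14,15) uN(1)] by blast
  obtain iv where iv: "i < iv" "iv < length ord" "ord ! iv = v"
    using out_nbr_idx[OF dist assms(14,15) uN(2)] by blast
  obtain jv where jv: "iu < jv" "jv < length ord" "ord ! jv = v"
    using out_nbr_idx[OF dist iu(2,3) vN(1)] by blast
  obtain iw where iw: "iu < iw" "iw < length ord" "ord ! iw = w"
    using out_nbr_idx[OF dist iu(2,3) vN(2)] by blast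
  have uv: "u \<noteq> v" using dist iu jv by (metis nth_eq_iff_index_eq order.strict_trans less_irrefl)
  have uw: "u \<noteq> w" using dist iu iw by (metis nth_eq_iff_index_eq order.strict_trans less_irrefl)
  have SX: "pext {u,v} x (\<beta> x) \<alpha> (\<alpha> x) (filter (\<lambda>s. fst s \<in> {u,v}) S) (filter (\<lambda>s. fst s \<in> insert x {u,v}) S)
    \<and> (\<forall>n\<in>{u,v}. \<alpha> n \<noteq> \<alpha> x) \<and> x \<notin> {u,v}"
    using stage_pext[OF bcr dist assms(14) assms(5)] assms(12,15) by simp
  have SU: "pext {v,w} u (\<beta> u) \<alpha> (\<alpha> u) (filter (\<lambda>s. fst s \<in> {v,w}) S) (filter (\<lambda>s. fst s \<in> insert u {v,w}) S)
    \<and> (\<forall>n\<in>{v,w}. \<alpha> n \<noteq> \<alpha> u) \<and> u \<notin> {v,w}"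
    using stage_pext[OF bcr dist iu(2) assms(5)] assms(13) iu(3) by simp
  define Tx where "Tx = filter (\<lambda>s. fst s \<in> {u,v}) S"
  define Yx where "Yx = filter (\<lambda>s. fst s \<in> insert x {u,v}) S"
  define T' where "T' = filter (\<lambda>s. fst s \<in> {v,w}) S"
  define R where "R = filter (\<lambda>s. fst s \<in> insert u {v,w}) S"
  define M where "M = {num_recol S (ord ! i') | i'. i < i' \<and> i' < length ord}"
  define c where "c = Max M"
  have finM: "finite M"
  proof -
    have "M = (\<lambda>i'. num_recol S (ord ! i')) ` {i'. i < i' \<and> i' < length ord}" unfolding M_def by blast
    then show ?thesis by simp
  qed
  have ac: "num_recol S u \<le> c" unfolding c_def using finM iu by (intro Max_ge) (auto simp: M_def)
  have bc: "num_recol S v \<le> c" unfolding c_def using finM iv by (intro Max_ge) (auto simp: M_def)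
  have dc: "num_recol S w \<le> c" unfolding c_def using finM iu iw by (intro Max_ge) (auto simp: M_def intro!: exI[of _ iw])
  have Ac: "int (num_recol S x) \<ge> int c - 1" using assms(16) unfolding c_def M_def .
  have nyA: "ny x Yx = num_recol S x" unfolding Yx_def by (rule ny_filter) simp
  have lenTx: "length Tx = num_recol S u + num_recol S v"
    unfolding Tx_def using len_filter2[OF uv, of S] ny_num[of u S] ny_num[of v S] by simp
  have PX: "px u v x (\<alpha> u) Tx Yx \<le> 3"
    using psi_x[of "{u,v}" x "\<beta> x" \<alpha> "\<alpha> x" Tx Yx u v] SX uv unfolding Tx_def Yx_def by blast
  have fTx: "filter (\<lambda>s. fst s \<in> {u,v}) R = Tx" unfolding R_def Tx_def by (rule filter_sub) auto
  have tvRT: "tvl u v (\<alpha> u) R \<le> tvl u v (\<alpha> u) Tx" using tvl_filter[of u v "\<alpha> u" R] fTx by simp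
  have PB: "pb x None None None Tx Yx \<le> 5"
    using psi_b[of "{u,v}" x "\<beta> x" \<alpha> "\<alpha> x" Tx Yx u v None None None] SX unfolding Tx_def Yx_def by blast
  have sp: "spl None Tx + 2 * uvu u v Tx \<le> length Tx" using spl_uvu[OF uv, of None Tx] by simp
  have badeq: "bad_triples (colors_of S x) = bw None None (cols x Yx)"
    unfolding Yx_def using cols_filter[of x "insert x {u,v}" S] by (simp add: bad_triples_bt bw_NN)
  have badA: "bad_triples (colors_of S x) \<le> num_recol S x"
    using badeq bw_le[of None None "cols x Yx"] len_cols[of x Yx] nyA by simp
  have pceq: "pattern_count (restrict_seq S {u, v, w}) u w v = pcl u w v R"
    unfolding R_def restrict_seq_def by (simp add: pattern_count_pcl)
  show ?thesis
  proof (cases "v = w")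
    case False
    have PU: "pu u v w (\<alpha> u) T' R \<le> 6"
      using psi_u[of "{v,w}" u "\<beta> u" \<alpha> "\<alpha> u" T' R v w] SU False unfolding T'_def R_def by blast
    have nyu: "ny u R = num_recol S u" unfolding R_def by (rule ny_filter) simp
    have nyv: "ny v T' = num_recol S v" unfolding T'_def by (rule ny_filter) simp
    have nyw: "ny w T' = num_recol S w" unfolding T'_def by (rule ny_filter) simp
    have pcu: "pcl u w v R \<le> uvu u v Tx" using uvu_filter[OF uw False, of R] fTx by simp
    have e1: "int (pcl u w v R) \<ge> int c - 34"
      using PU PX Ac ac bc dc tvRT lenTx nyA nyu nyv nyw unfolding pu_def px_def by linarith
    have e2: "bad_triples (colors_of S x) \<le> 74"
    proof -
      have "int (bad_triples (colors_of S x)) \<le> 74"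
        using PB PU PX Ac ac bc dc tvRT lenTx nyA nyu nyv nyw sp pcu badeq unfolding pb_def pu_def px_def by linarith
      then show ?thesis by simp
    qed
    show ?thesis using e1 e2 pceq unfolding c_def M_def by simp
  next
    case True
    have SU1: "pext {v} u (\<beta> u) \<alpha> (\<alpha> u) T' R" using SU True unfolding T'_def R_def by simp
    have PU1: "3 * ny u R \<le> length T' + 5" using psi_u1[OF SU1] uv by blast
    have nyu: "ny u R = num_recol S u" unfolding R_def by (rule ny_filter) simp
    have lT: "length T' = num_recol S v" unfolding T'_def using True
      by (simp add: num_recol_def colors_of_def restrict_seq_def)
    have cs: "c \<le> 10" using PU1 PX Ac ac bc tvRT lenTx nyA nyu lT unfolding px_def by linarith
    have "int (num_recol S x) \<le> 11" using PX cs ac bc lenTx nyA unfolding px_def by linarith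
    then have "bad_triples (colors_of S x) \<le> 74" using badA by linarith
    moreover have "int (pattern_count (restrict_seq S {u, v, w}) u w v) \<ge> int c - 34" using cs by linarith
    ultimately show ?thesis unfolding c_def M_def by simp
  qed
qed

end
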